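(* Let $n\geqslant 3$. Any eigenfunction of the Star graph $S_n$ with eigenvalue $n-2$ can be uniquely reconstructed from its values on the second neighbourhood of any vertex: if $f,g$ are eigenfunctions of $S_n$ with eigenvalue $n-2$, $v$ is a vertex of $S_n$, and $f(x)=g(x)$ for every vertex $x$ at distance exactly $2$ from $v$, then $f=g$.
   Context: Write a permutation $\pi$ of $\{1,\ldots,n\}$ as the sequence $[\pi_1\ldots\pi_n]$. The Star graph $S_n$ has vertex set $\mathrm{Sym}_n$, and two permutations are adjacent iff one is obtained from the other by exchanging the entries in positions $1$ and $i$ for some $2\le i\le n$ (the Cayley graph of $\mathrm{Sym}_n$ generated by the transpositions $(1\ i)$, $2\le i\le n$). A function $f:\mathrm{Sym}_n\to\mathbb{R}$ is an eigenfunction with eigenvalue $\theta$ if $f\not\equiv 0$ and $\theta f(x)=\sum_{y\in N(x)}f(y)$ for every vertex $x$, where $N(x)$ is the neighbourhood of $x$. The second neighbourhood of a vertex $v$ is the set of vertices at distance exactly $2$ from $v$. *)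

theory Defs
  imports "HOL-Combinatorics.Combinatorics"
begin

text \<open>A permutation pi of {1..n} is represented as a function nat => nat with
  pi permutes {1..n}; the sequence [pi_1 ... pi_n] is (pi 1, ..., pi n).\<close>

definition star_vertices :: "nat \<Rightarrow> (nat \<Rightarrow> nat) set" where
  "star_vertices n = {p. p permutes {1..n}}"

text \<open>Exchanging the entries in positions 1 and i: the new sequence is
  p o (1 i).\<close>
definition star_adj :: "nat \<Rightarrow> (nat \<Rightarrow> nat) \<Rightarrow> (nat \<Rightarrow> nat) \<Rightarrow> bool" where
  "star_adj n p q \<longleftrightarrow> p \<in> star_vertices n \<and> q \<in> star_vertices n \<and>
     (\<exists>i\<in>{2..n}. q = p \<circ> Transposition.transpose 1 i)"

definition star_nbhd :: "nat \<Rightarrow> (nat \<Rightarrow> nat) \<Rightarrow> (nat \<Rightarrow> nat) set" where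
  "star_nbhd n p = {q. star_adj n p q}"

definition star_eigenfunction ::
  "nat \<Rightarrow> ((nat \<Rightarrow> nat) \<Rightarrow> real) \<Rightarrow> real \<Rightarrow> bool" where
  "star_eigenfunction n f \<theta> \<longleftrightarrow>
     (\<exists>x\<in>star_vertices n. f x \<noteq> 0) \<and>
     (\<forall>x\<in>star_vertices n. \<theta> * f x = (\<Sum>y\<in>star_nbhd n x. f y))"

inductive star_walk :: "nat \<Rightarrow> (nat \<Rightarrow> nat) \<Rightarrow> nat \<Rightarrow> (nat \<Rightarrow> nat) \<Rightarrow> bool" where
  "p \<in> star_vertices n \<Longrightarrow> star_walk n p 0 p"
| "star_walk n p k q \<Longrightarrow> star_adj n q r \<Longrightarrow> star_walk n p (Suc k) r"

definition star_dist :: "nat \<Rightarrow> (nat \<Rightarrow> nat) \<Rightarrow> (nat \<Rightarrow> nat) \<Rightarrow> nat" where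
  "star_dist n p q = (LEAST k. star_walk n p k q)"

definition second_nbhd :: "nat \<Rightarrow> (nat \<Rightarrow> nat) \<Rightarrow> (nat \<Rightarrow> nat) set" where
  "second_nbhd n v = {x \<in> star_vertices n. star_dist n v x = 2}"

end

theory Submission
  imports Defs
begin

abbreviation tp :: "nat \<Rightarrow> nat \<Rightarrow> nat \<Rightarrow> nat" where "tp \<equiv> Transposition.transpose"

definition Xop :: "nat \<Rightarrow> ((nat \<Rightarrow> nat) \<Rightarrow> real) \<Rightarrow> (nat \<Rightarrow> nat) \<Rightarrow> real" where
  "Xop n g x = (\<Sum>k\<in>{2..n}. g (x \<circ> tp 1 k))"

definition Jop :: "nat \<Rightarrow> nat \<Rightarrow> ((nat \<Rightarrow> nat) \<Rightarrow> real) \<Rightarrow> (nat \<Rightarrow> nat) \<Rightarrow> real" where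
  "Jop n p g x = (\<Sum>k\<in>{2..n}-{p}. g (x \<circ> tp p k))"

definition Eg :: "nat \<Rightarrow> ((nat \<Rightarrow> nat) \<Rightarrow> real) \<Rightarrow> bool" where
  "Eg n g \<longleftrightarrow> (\<forall>x\<in>star_vertices n. Xop n g x = (real n - 2) * g x)"

lemma sym_comp:
  assumes "x \<in> star_vertices n" "i \<in> {1..n}" "j \<in> {1..n}"
  shows "x \<circ> tp i j \<in> star_vertices n"
  using assms unfolding star_vertices_def
  by (auto intro!: permutes_compose permutes_swap_id)

lemma finite_sym: "finite (star_vertices n)"
  unfolding star_vertices_def by (rule finite_permutations) simp

lemma id_sym: "id \<in> star_vertices n"
  unfolding star_vertices_def by (simp add: permutes_id)

lemma sum_inv:
  assumes "i \<in> {1..n}" "j \<in> {1..n}"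
  shows "(\<Sum>x\<in>star_vertices n. F (x \<circ> tp i j)) = (\<Sum>x\<in>star_vertices n. F x)"
proof -
  have "bij_betw (\<lambda>x. x \<circ> tp i j) (star_vertices n) (star_vertices n)"
    by (rule bij_betw_byWitness[where f'="\<lambda>x. x \<circ> tp i j"])
       (auto simp: comp_assoc intro: sym_comp[OF _ assms])
  then show ?thesis by (rule sum.reindex_bij_betw)
qed

lemma sym_val: "x \<in> star_vertices n \<Longrightarrow> i \<in> {1..n} \<Longrightarrow> x i \<in> {1..n}"
  using permutes_in_image[of x "{1..n}" i] unfolding star_vertices_def by blast

lemma sym_inj: "x \<in> star_vertices n \<Longrightarrow> x i = x j \<Longrightarrow> i = j"
  using permutes_inj[of x "{1..n}"] unfolding star_vertices_def inj_def by blast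

lemma nbhd_eq:
  assumes "x \<in> star_vertices n"
  shows "star_nbhd n x = (\<lambda>k. x \<circ> tp 1 k) ` {2..n}"
proof -
  have "\<forall>i\<in>{2..n}. x \<circ> tp 1 i \<in> star_vertices n"
    by (intro ballI sym_comp[OF assms]) auto
  then show ?thesis using assms unfolding star_nbhd_def star_adj_def by blast
qed

lemma nbhd_sum:
  assumes "x \<in> star_vertices n"
  shows "(\<Sum>y\<in>star_nbhd n x. f y) = Xop n f x"
proof -
  have "inj_on (\<lambda>k. x \<circ> tp 1 k) {2..n}"
  proof
    fix a b assume "a \<in> {2..n}" "b \<in> {2..n}" "x \<circ> tp 1 a = x \<circ> tp 1 b"
    then have "x (tp 1 a 1) = x (tp 1 b 1)" by (metis comp_apply)
    then show "a = b" using sym_inj[OF assms] by simp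
  qed
  then show ?thesis unfolding nbhd_eq[OF assms] Xop_def by (simp add: sum.reindex)
qed

lemma eig_Xop:
  assumes "star_eigenfunction n f \<theta>" "x \<in> star_vertices n"
  shows "\<theta> * f x = Xop n f x"
  using assms nbhd_sum unfolding star_eigenfunction_def by auto

lemma Xop_diff: "Xop n (\<lambda>y. a y - b y) x = Xop n a x - Xop n b x"
  unfolding Xop_def by (simp add: sum_subtractf)

lemma Jop_diff: "Jop n p (\<lambda>y. a y - b y) x = Jop n p a x - Jop n p b x"
  unfolding Jop_def by (simp add: sum_subtractf)

lemma Xop_cmult: "Xop n (\<lambda>y. c * a y) x = c * Xop n a x"
  unfolding Xop_def by (simp add: sum_distrib_left)

lemma Jop_cmult: "Jop n p (\<lambda>y. c * a y) x = c * Jop n p a x"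
  unfolding Jop_def by (simp add: sum_distrib_left)

lemma card_K: "p \<in> {2..n} \<Longrightarrow> real (card ({2..n}-{p})) = real n - 2"
  by (simp add: card_Diff_singleton of_nat_diff)

lemma cancel_aux: "(a - 1) * S = (a - 2) * (S::real) \<Longrightarrow> S = 0"
  by (simp add: algebra_simps)

lemma sum_zero:
  assumes "Eg n g" "n \<ge> 3"
  shows "(\<Sum>x\<in>star_vertices n. g x) = 0"
proof -
  have "(\<Sum>x\<in>star_vertices n. Xop n g x) = (\<Sum>k\<in>{2..n}. \<Sum>x\<in>star_vertices n. g (x \<circ> tp 1 k))"
    unfolding Xop_def by (rule sum.swap)
  also have "\<dots> = (\<Sum>k\<in>{2..n}. \<Sum>x\<in>star_vertices n. g x)"
    by (rule sum.cong) (auto intro: sum_inv)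
  also have "\<dots> = (real n - 1) * (\<Sum>x\<in>star_vertices n. g x)"
    using assms(2) by (simp add: of_nat_diff)
  finally have "(\<Sum>x\<in>star_vertices n. Xop n g x) = (real n - 1) * (\<Sum>x\<in>star_vertices n. g x)" .
  moreover have "(\<Sum>x\<in>star_vertices n. Xop n g x) = (real n - 2) * (\<Sum>x\<in>star_vertices n. g x)"
    using assms(1) unfolding Eg_def by (simp add: sum_distrib_left)
  ultimately have "(real n - 1) * (\<Sum>x\<in>star_vertices n. g x) = (real n - 2) * (\<Sum>x\<in>star_vertices n. g x)"
    by simp
  then show ?thesis by (rule cancel_aux)
qed


lemma C1: "p \<noteq> k \<Longrightarrow> p \<noteq> 1 \<Longrightarrow> k \<noteq> 1 \<Longrightarrow> tp 1 p \<circ> tp 1 k = tp p k \<circ> tp 1 p"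
  by (auto simp: fun_eq_iff transpose_def)

lemma C2: "p \<noteq> k \<Longrightarrow> p \<noteq> 1 \<Longrightarrow> k \<noteq> 1 \<Longrightarrow> tp 1 p \<circ> tp p k = tp 1 k \<circ> tp 1 p"
  by (auto simp: fun_eq_iff transpose_def)

lemma C3: "p \<noteq> k \<Longrightarrow> p \<noteq> 1 \<Longrightarrow> k \<noteq> 1 \<Longrightarrow> tp 1 m \<circ> tp p k = tp p k \<circ> tp 1 (tp p k m)"
  by (auto simp: fun_eq_iff transpose_def)

lemma sq_le:
  fixes d :: "(nat \<Rightarrow> nat) \<Rightarrow> real"
  assumes "i \<in> {1..n}" "j \<in> {1..n}"
  shows "(\<Sum>x\<in>star_vertices n. d x * d (x \<circ> tp i j)) \<le> (\<Sum>x\<in>star_vertices n. (d x)^2)"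
proof -
  have "(\<Sum>x\<in>star_vertices n. d x * d (x \<circ> tp i j))
      \<le> (\<Sum>x\<in>star_vertices n. ((d x)^2 + (d (x \<circ> tp i j))^2) / 2)"
  proof (rule sum_mono)
    fix x
    have "0 \<le> (d x - d (x \<circ> tp i j))^2" by simp
    then show "d x * d (x \<circ> tp i j) \<le> ((d x)^2 + (d (x \<circ> tp i j))^2) / 2"
      by (simp add: power2_eq_square algebra_simps)
  qed
  also have "\<dots> = ((\<Sum>x\<in>star_vertices n. (d x)^2) + (\<Sum>x\<in>star_vertices n. (d (x \<circ> tp i j))^2)) / 2"
    by (simp only: sum_divide_distrib[symmetric] sum.distrib)
  also have "(\<Sum>x\<in>star_vertices n. (d (x \<circ> tp i j))^2) = (\<Sum>x\<in>star_vertices n. (d x)^2)"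
    by (rule sum_inv[OF assms])
  finally show ?thesis by (simp add: comp_def)
qed

lemma Jsum_le:
  fixes d :: "(nat \<Rightarrow> nat) \<Rightarrow> real"
  assumes "p \<in> {2..n}"
  shows "(\<Sum>x\<in>star_vertices n. d x * Jop n p d x) \<le> (real n - 2) * (\<Sum>x\<in>star_vertices n. (d x)^2)"
proof -
  have "(\<Sum>x\<in>star_vertices n. d x * Jop n p d x)
     = (\<Sum>k\<in>{2..n}-{p}. \<Sum>x\<in>star_vertices n. d x * d (x \<circ> tp p k))"
    unfolding Jop_def by (simp add: sum_distrib_left sum.swap[of _ "star_vertices n"])
  also have "\<dots> \<le> (\<Sum>k\<in>{2..n}-{p}. \<Sum>x\<in>star_vertices n. (d x)^2)"
    by (rule sum_mono, rule sq_le) (use assms in auto)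
  also have "\<dots> = (real n - 2) * (\<Sum>x\<in>star_vertices n. (d x)^2)"
    using card_K[OF assms] by simp
  finally show ?thesis .
qed

lemma J_zero:
  assumes "p \<in> {2..n}" "\<forall>x\<in>star_vertices n. Jop n p d x = (real n - 1) * d x"
  shows "\<forall>x\<in>star_vertices n. d x = 0"
proof -
  let ?Q = "\<Sum>x\<in>star_vertices n. (d x)^2"
  have "(\<Sum>x\<in>star_vertices n. d x * Jop n p d x) = (\<Sum>x\<in>star_vertices n. (real n - 1) * (d x)^2)"
    by (rule sum.cong[OF refl]) (use assms(2) in \<open>simp add: power2_eq_square\<close>)
  also have "\<dots> = (real n - 1) * ?Q" by (simp add: sum_distrib_left)
  finally have "(\<Sum>x\<in>star_vertices n. d x * Jop n p d x) = (real n - 1) * ?Q" .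
  with Jsum_le[OF assms(1), of d] have "(real n - 1) * ?Q \<le> (real n - 2) * ?Q" by simp
  then have "?Q \<le> 0" by (simp add: algebra_simps)
  moreover have "?Q \<ge> 0" by (rule sum_nonneg) simp
  ultimately have "?Q = 0" by simp
  then have "\<forall>x\<in>star_vertices n. (d x)^2 = 0"
    using sum_nonneg_eq_0_iff[OF finite_sym, where f="\<lambda>x. (d x)^2"] by simp
  then show ?thesis by simp
qed

lemma J_top:
  assumes "p \<in> {2..n}" "\<forall>x\<in>star_vertices n. Jop n p w x = (real n - 2) * w x"
  shows "\<forall>x\<in>star_vertices n. \<forall>k\<in>{2..n}-{p}. w (x \<circ> tp p k) = w x"
proof -
  let ?Q = "\<Sum>x\<in>star_vertices n. (w x)^2"
  have "(\<Sum>k\<in>{2..n}-{p}. \<Sum>x\<in>star_vertices n. (w x - w (x \<circ> tp p k))^2)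
      = (\<Sum>k\<in>{2..n}-{p}. 2 * ?Q - 2 * (\<Sum>x\<in>star_vertices n. w x * w (x \<circ> tp p k)))"
  proof (rule sum.cong[OF refl])
    fix k assume k: "k \<in> {2..n}-{p}"
    have "(\<Sum>x\<in>star_vertices n. (w x - w (x \<circ> tp p k))^2)
       = ?Q + (\<Sum>x\<in>star_vertices n. (w (x \<circ> tp p k))^2) - 2 * (\<Sum>x\<in>star_vertices n. w x * w (x \<circ> tp p k))"
      by (simp add: power2_diff sum.distrib sum_subtractf sum_distrib_left algebra_simps)
    also have "(\<Sum>x\<in>star_vertices n. (w (x \<circ> tp p k))^2) = ?Q"
      by (rule sum_inv) (use assms k in auto)
    finally show "(\<Sum>x\<in>star_vertices n. (w x - w (x \<circ> tp p k))^2)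
      = 2 * ?Q - 2 * (\<Sum>x\<in>star_vertices n. w x * w (x \<circ> tp p k))" by (simp add: comp_def)
  qed
  also have "\<dots> = (real n - 2) * (2 * ?Q) - 2 * (\<Sum>x\<in>star_vertices n. w x * Jop n p w x)"
    unfolding Jop_def using card_K[OF assms(1)]
    by (simp add: sum_subtractf sum_distrib_left sum.swap[of _ "star_vertices n"])
  also have "(\<Sum>x\<in>star_vertices n. w x * Jop n p w x) = (\<Sum>x\<in>star_vertices n. (real n - 2) * (w x)^2)"
    by (rule sum.cong[OF refl]) (use assms(2) in \<open>simp add: power2_eq_square\<close>)
  also have "\<dots> = (real n - 2) * ?Q" by (simp add: sum_distrib_left)
  finally have Z: "(\<Sum>k\<in>{2..n}-{p}. \<Sum>x\<in>star_vertices n. (w x - w (x \<circ> tp p k))^2) = 0"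
    by (simp add: comp_def)
  have "\<forall>k\<in>{2..n}-{p}. (\<Sum>x\<in>star_vertices n. (w x - w (x \<circ> tp p k))^2) = 0"
    using Z sum_nonneg_eq_0_iff[of "{2..n}-{p}" "\<lambda>k. \<Sum>x\<in>star_vertices n. (w x - w (x \<circ> tp p k))^2"]
    by (simp add: sum_nonneg)
  then have "\<forall>k\<in>{2..n}-{p}. \<forall>x\<in>star_vertices n. (w x - w (x \<circ> tp p k))^2 = 0"
  proof (intro ballI)
    fix k x assume A: "\<forall>k\<in>{2..n}-{p}. (\<Sum>x\<in>star_vertices n. (w x - w (x \<circ> tp p k))^2) = 0"
      and k: "k \<in> {2..n}-{p}" and x: "x \<in> star_vertices n"
    from A k have "(\<Sum>x\<in>star_vertices n. (w x - w (x \<circ> tp p k))^2) = 0" by blast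
    then show "(w x - w (x \<circ> tp p k))^2 = 0"
      using sum_nonneg_eq_0_iff[OF finite_sym, where f="\<lambda>x. (w x - w (x \<circ> tp p k))^2"] x by simp
  qed
  then show ?thesis by simp
qed


lemma comp_tt: "x \<circ> tp a b \<circ> tp a b = x"
  by (simp add: comp_assoc)

lemma JS:
  assumes E: "Eg n G" and x: "x \<in> star_vertices n" and p: "p \<in> {2..n}"
  shows "Jop n p (\<lambda>y. G (y \<circ> tp 1 p)) x = (real n - 2) * G (x \<circ> tp 1 p) - G x"
proof -
  have xp: "x \<circ> tp 1 p \<in> star_vertices n" using p by (intro sym_comp[OF x]) auto
  have "Xop n G (x \<circ> tp 1 p) = (real n - 2) * G (x \<circ> tp 1 p)"
    using E xp unfolding Eg_def by blast
  moreover have "Xop n G (x \<circ> tp 1 p) = G x + Jop n p (\<lambda>y. G (y \<circ> tp 1 p)) x"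
  proof -
    have "Xop n G (x \<circ> tp 1 p) = G (x \<circ> tp 1 p \<circ> tp 1 p) + (\<Sum>k\<in>{2..n}-{p}. G (x \<circ> tp 1 p \<circ> tp 1 k))"
      unfolding Xop_def using p by (simp add: sum.remove)
    also have "(\<Sum>k\<in>{2..n}-{p}. G (x \<circ> tp 1 p \<circ> tp 1 k)) = (\<Sum>k\<in>{2..n}-{p}. G (x \<circ> tp p k \<circ> tp 1 p))"
    proof (rule sum.cong[OF refl])
      fix k assume "k \<in> {2..n}-{p}"
      then have "tp 1 p \<circ> tp 1 k = tp p k \<circ> tp 1 p" using p by (intro C1) auto
      then show "G (x \<circ> tp 1 p \<circ> tp 1 k) = G (x \<circ> tp p k \<circ> tp 1 p)" by (simp add: comp_assoc)
    qed
    finally show ?thesis unfolding Jop_def by (simp add: comp_tt comp_def)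
  qed
  ultimately show ?thesis by simp
qed

lemma XJ_comm:
  assumes p: "p \<in> {2..n}"
  shows "Xop n (Jop n p g) x = Jop n p (Xop n g) x"
proof -
  have "Xop n (Jop n p g) x = (\<Sum>k\<in>{2..n}-{p}. \<Sum>m\<in>{2..n}. g (x \<circ> tp 1 m \<circ> tp p k))"
    unfolding Xop_def Jop_def by (rule sum.swap)
  also have "\<dots> = (\<Sum>k\<in>{2..n}-{p}. \<Sum>m\<in>{2..n}. g (x \<circ> tp p k \<circ> tp 1 m))"
  proof (rule sum.cong[OF refl])
    fix k assume k: "k \<in> {2..n}-{p}"
    have "(\<Sum>m\<in>{2..n}. g (x \<circ> tp 1 m \<circ> tp p k)) = (\<Sum>m\<in>{2..n}. g (x \<circ> tp p k \<circ> tp 1 (tp p k m)))"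
    proof (rule sum.cong[OF refl])
      fix m
      have "tp 1 m \<circ> tp p k = tp p k \<circ> tp 1 (tp p k m)" using p k by (intro C3) auto
      then show "g (x \<circ> tp 1 m \<circ> tp p k) = g (x \<circ> tp p k \<circ> tp 1 (tp p k m))" by (simp add: comp_assoc)
    qed
    also have "\<dots> = (\<Sum>m\<in>{2..n}. g (x \<circ> tp p k \<circ> tp 1 m))"
    proof -
      have "bij_betw (tp p k) {2..n} {2..n}"
        using p k by (intro permutes_imp_bij permutes_swap_id) auto
      then show ?thesis by (rule sum.reindex_bij_betw[where g="\<lambda>m. g (x \<circ> tp p k \<circ> tp 1 m)"])
    qed
    finally show "(\<Sum>m\<in>{2..n}. g (x \<circ> tp 1 m \<circ> tp p k)) = (\<Sum>m\<in>{2..n}. g (x \<circ> tp p k \<circ> tp 1 m))" .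
  qed
  also have "\<dots> = Jop n p (Xop n g) x"
    unfolding Xop_def Jop_def ..
  finally show ?thesis .
qed

lemma Eg_J:
  assumes E: "Eg n g" and p: "p \<in> {2..n}"
  shows "Eg n (Jop n p g)"
  unfolding Eg_def
proof
  fix x assume x: "x \<in> star_vertices n"
  have "Xop n (Jop n p g) x = Jop n p (Xop n g) x" by (rule XJ_comm[OF p])
  also have "\<dots> = (\<Sum>k\<in>{2..n}-{p}. (real n - 2) * g (x \<circ> tp p k))"
    unfolding Jop_def
  proof (rule sum.cong[OF refl])
    fix k assume "k \<in> {2..n}-{p}"
    then have "x \<circ> tp p k \<in> star_vertices n" using p by (intro sym_comp[OF x]) auto
    then show "Xop n g (x \<circ> tp p k) = (real n - 2) * g (x \<circ> tp p k)" using E unfolding Eg_def by blast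
  qed
  also have "\<dots> = (real n - 2) * Jop n p g x" unfolding Jop_def by (simp add: sum_distrib_left)
  finally show "Xop n (Jop n p g) x = (real n - 2) * Jop n p g x" .
qed

lemma Eg_diff: "Eg n a \<Longrightarrow> Eg n b \<Longrightarrow> Eg n (\<lambda>y. a y - b y)"
  unfolding Eg_def by (simp add: Xop_diff algebra_simps)

lemma Eg_cmult: "Eg n a \<Longrightarrow> Eg n (\<lambda>y. c * a y)"
  unfolding Eg_def by (simp add: Xop_cmult)

lemma Jop_add: "Jop n p (\<lambda>y. a y + b y) x = Jop n p a x + Jop n p b x"
  unfolding Jop_def by (simp add: sum.distrib)

definition W :: "nat \<Rightarrow> nat \<Rightarrow> ((nat \<Rightarrow> nat) \<Rightarrow> real) \<Rightarrow> (nat \<Rightarrow> nat) \<Rightarrow> real" where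
  "W n p g x = Jop n p g (x \<circ> tp 1 p) - (real n - 2) * g (x \<circ> tp 1 p) + g x"

lemma W_J:
  assumes E: "Eg n g" and p: "p \<in> {2..n}"
  shows "\<forall>x\<in>star_vertices n. Jop n p (W n p g) x = (real n - 2) * W n p g x"
proof
  fix x assume x: "x \<in> star_vertices n"
  define G where "G = (\<lambda>y. Jop n p g y - (real n - 2) * g y)"
  have EG: "Eg n G" unfolding G_def by (intro Eg_diff Eg_cmult Eg_J E p)
  have Weq: "W n p g = (\<lambda>y. G (y \<circ> tp 1 p) + g y)"
    unfolding W_def G_def by (rule ext) simp
  have "Jop n p (W n p g) x = Jop n p (\<lambda>y. G (y \<circ> tp 1 p)) x + Jop n p g x"
    unfolding Weq by (rule Jop_add)
  also have "\<dots> = (real n - 2) * G (x \<circ> tp 1 p) - G x + Jop n p g x"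
    using JS[OF EG x p] by linarith
  also have "\<dots> = (real n - 2) * W n p g x"
    unfolding Weq by (simp add: G_def algebra_simps)
  finally show "Jop n p (W n p g) x = (real n - 2) * W n p g x" .
qed

lemma gen:
  assumes p: "p \<in> {2..n}"
    and inv: "\<forall>x\<in>star_vertices n. \<forall>k\<in>{2..n}-{p}. F (x \<circ> tp p k) = F x"
    and x: "x \<in> star_vertices n" and y: "y \<in> star_vertices n" and xy: "x 1 = y 1"
  shows "F x = F y"
proof -
  have inv2: "F (z \<circ> tp a b) = F z" if z: "z \<in> star_vertices n" and a: "a \<in> {2..n}" and b: "b \<in> {2..n}" for z a b
  proof (cases "a = b")
    case True then show ?thesis by simp
  next
    case False
    show ?thesis
    proof (cases "a = p")
      case True then show ?thesis using inv z b False by auto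
    next
      case ap: False
      show ?thesis
      proof (cases "b = p")
        case True then show ?thesis using inv z a ap by (auto simp: transpose_commute)
      next
        case bp: False
        have tr: "tp a p \<circ> tp p b \<circ> tp a p = tp a b" using False bp by (intro transpose_comp_triple) auto
        have z1: "z \<circ> tp p a \<in> star_vertices n" using a p by (intro sym_comp[OF z]) auto
        have z2: "z \<circ> tp p a \<circ> tp p b \<in> star_vertices n" using b p by (intro sym_comp[OF z1]) auto
        have "F (z \<circ> tp a b) = F (z \<circ> tp p a \<circ> tp p b \<circ> tp p a)"
          using tr by (simp add: comp_assoc transpose_commute)
        also have "\<dots> = F (z \<circ> tp p a \<circ> tp p b)" using inv z2 a ap by auto
        also have "\<dots> = F (z \<circ> tp p a)" using inv z1 b bp by auto
        also have "\<dots> = F z" using inv z a ap by auto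
        finally show ?thesis .
      qed
    qed
  qed
  have xp: "x permutes {1..n}" and yp: "y permutes {1..n}" using x y unfolding star_vertices_def by auto
  define \<sigma> where "\<sigma> = inv x \<circ> y"
  have s1: "\<sigma> permutes {1..n}" unfolding \<sigma>_def by (intro permutes_compose permutes_inv xp yp)
  have "\<sigma> 1 = 1" unfolding \<sigma>_def using xy permutes_inverses(2)[OF xp, of 1] by simp
  moreover have "\<And>z. z \<in> {1..n} - {2..n} \<Longrightarrow> z = 1" by auto
  ultimately have s2: "\<sigma> permutes {2..n}"
    by (intro permutes_superset[OF s1]) metis
  have yeq: "y = x \<circ> \<sigma>" unfolding \<sigma>_def using permutes_inv_o(1)[OF xp] by (metis comp_assoc id_comp)
  have "\<forall>z\<in>star_vertices n. F (z \<circ> \<sigma>) = F z"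
    using s2 finite_atLeastAtMost[of 2 n]
  proof (induction rule: permutes_induct)
    case id then show ?case by simp
  next
    case (swap a b q)
    show ?case
    proof
      fix z assume z: "z \<in> star_vertices n"
      have za: "z \<circ> tp a b \<in> star_vertices n" using swap by (intro sym_comp[OF z]) auto
      have "F (z \<circ> (tp a b \<circ> q)) = F (z \<circ> tp a b \<circ> q)" by (simp add: comp_assoc)
      also have "\<dots> = F (z \<circ> tp a b)" using swap.IH za by blast
      also have "\<dots> = F z" using inv2 z swap by blast
      finally show "F (z \<circ> (tp a b \<circ> q)) = F z" .
    qed
  qed
  then show ?thesis using x yeq by simp
qed


lemma W_col:
  assumes E: "Eg n g" and x: "x \<in> star_vertices n"
  shows "(\<Sum>p\<in>{2..n}. W n p g x) = 0"
proof -
  have Ex: "\<And>z. z \<in> star_vertices n \<Longrightarrow> Xop n g z = (real n - 2) * g z" using E unfolding Eg_def by blast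
  have xk: "\<And>k. k \<in> {2..n} \<Longrightarrow> x \<circ> tp 1 k \<in> star_vertices n" by (intro sym_comp[OF x]) auto
  have A: "Jop n p g (x \<circ> tp 1 p) = (\<Sum>k\<in>{2..n}. g (x \<circ> tp 1 k \<circ> tp 1 p)) - g x" if p: "p \<in> {2..n}" for p
  proof -
    have "Jop n p g (x \<circ> tp 1 p) = (\<Sum>k\<in>{2..n}-{p}. g (x \<circ> tp 1 k \<circ> tp 1 p))"
      unfolding Jop_def
    proof (rule sum.cong[OF refl])
      fix k assume "k \<in> {2..n}-{p}"
      then have "tp 1 p \<circ> tp p k = tp 1 k \<circ> tp 1 p" using p by (intro C2) auto
      then show "g (x \<circ> tp 1 p \<circ> tp p k) = g (x \<circ> tp 1 k \<circ> tp 1 p)" by (simp add: comp_assoc)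
    qed
    also have "\<dots> = (\<Sum>k\<in>{2..n}. g (x \<circ> tp 1 k \<circ> tp 1 p)) - g (x \<circ> tp 1 p \<circ> tp 1 p)"
      using p by (simp add: sum_diff1)
    finally show ?thesis by (simp add: comp_tt comp_def)
  qed
  have "(\<Sum>p\<in>{2..n}. W n p g x)
      = (\<Sum>p\<in>{2..n}. (\<Sum>k\<in>{2..n}. g (x \<circ> tp 1 k \<circ> tp 1 p)) - g x - (real n - 2) * g (x \<circ> tp 1 p) + g x)"
    unfolding W_def
  proof (rule sum.cong[OF refl])
    fix p assume "p \<in> {2..n}"
    from A[OF this] show "Jop n p g (x \<circ> tp 1 p) - (real n - 2) * g (x \<circ> tp 1 p) + g x =
      (\<Sum>k\<in>{2..n}. g (x \<circ> tp 1 k \<circ> tp 1 p)) - g x - (real n - 2) * g (x \<circ> tp 1 p) + g x"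
      by linarith
  qed
  also have "\<dots> = (\<Sum>p\<in>{2..n}. \<Sum>k\<in>{2..n}. g (x \<circ> tp 1 k \<circ> tp 1 p)) - (real n - 2) * Xop n g x"
    unfolding Xop_def by (simp add: sum_subtractf sum_distrib_left)
  also have "(\<Sum>p\<in>{2..n}. \<Sum>k\<in>{2..n}. g (x \<circ> tp 1 k \<circ> tp 1 p)) = (\<Sum>k\<in>{2..n}. Xop n g (x \<circ> tp 1 k))"
    unfolding Xop_def by (rule sum.swap)
  also have "\<dots> = (\<Sum>k\<in>{2..n}. (real n - 2) * g (x \<circ> tp 1 k))"
  proof (rule sum.cong[OF refl])
    fix k assume "k \<in> {2..n}"
    from Ex[OF xk[OF this]] show "Xop n g (x \<circ> tp 1 k) = (real n - 2) * g (x \<circ> tp 1 k)" .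
  qed
  also have "\<dots> = (real n - 2) * Xop n g x" unfolding Xop_def by (simp add: sum_distrib_left)
  finally show ?thesis by simp
qed

lemma tp_sym: "a \<in> {1..n} \<Longrightarrow> tp 1 a \<in> star_vertices n"
  unfolding star_vertices_def by (auto intro: permutes_swap_id)

lemma W_dep:
  assumes E: "Eg n g" and p: "p \<in> {2..n}" and x: "x \<in> star_vertices n"
  shows "W n p g x = W n p g (tp 1 (x 1))"
proof (rule gen[OF p _ x])
  show "\<forall>x\<in>star_vertices n. \<forall>k\<in>{2..n} - {p}. W n p g (x \<circ> tp p k) = W n p g x"
    by (rule J_top[OF p W_J[OF E p]])
  show "tp 1 (x 1) \<in> star_vertices n" by (rule tp_sym) (use sym_val[OF x, of 1] p in auto)
  show "x 1 = tp 1 (x 1) 1" by simp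
qed

definition Ad :: "nat \<Rightarrow> (nat \<Rightarrow> nat \<Rightarrow> real) \<Rightarrow> (nat \<Rightarrow> nat) \<Rightarrow> real" where
  "Ad n \<phi> x = (\<Sum>p\<in>{2..n}. \<phi> p (x p))"

lemma upd1:
  assumes i: "i \<in> {2..n}"
  shows "Ad n \<phi> (z \<circ> tp 1 i) = Ad n \<phi> z - \<phi> i (z i) + \<phi> i (z 1)"
proof -
  have "Ad n \<phi> (z \<circ> tp 1 i) = \<phi> i (z 1) + (\<Sum>p\<in>{2..n}-{i}. \<phi> p ((z \<circ> tp 1 i) p))"
    unfolding Ad_def using i by (simp add: sum.remove)
  also have "(\<Sum>p\<in>{2..n}-{i}. \<phi> p ((z \<circ> tp 1 i) p)) = (\<Sum>p\<in>{2..n}-{i}. \<phi> p (z p))"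
    by (rule sum.cong[OF refl]) auto
  also have "(\<Sum>p\<in>{2..n}-{i}. \<phi> p (z p)) = Ad n \<phi> z - \<phi> i (z i)"
    unfolding Ad_def using i by (simp add: sum_diff1)
  finally show ?thesis by (simp add: comp_def)
qed

lemma upd2:
  assumes i: "i \<in> {2..n}" and j: "j \<in> {2..n}" and ij: "i \<noteq> j"
  shows "Ad n \<phi> (z \<circ> tp i j) = Ad n \<phi> z - \<phi> i (z i) - \<phi> j (z j) + \<phi> i (z j) + \<phi> j (z i)"
proof -
  have j': "j \<in> {2..n}-{i}" using j ij by auto
  have "Ad n \<phi> (z \<circ> tp i j) = \<phi> i (z j) + (\<phi> j (z i) + (\<Sum>p\<in>{2..n}-{i}-{j}. \<phi> p ((z \<circ> tp i j) p)))"
    unfolding Ad_def using i j' by (simp add: sum.remove[of _ i] sum.remove[of _ j])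
  also have "(\<Sum>p\<in>{2..n}-{i}-{j}. \<phi> p ((z \<circ> tp i j) p)) = (\<Sum>p\<in>{2..n}-{i}-{j}. \<phi> p (z p))"
    by (rule sum.cong[OF refl]) auto
  also have "(\<Sum>p\<in>{2..n}-{i}-{j}. \<phi> p (z p)) = Ad n \<phi> z - \<phi> i (z i) - \<phi> j (z j)"
    unfolding Ad_def using i j' by (simp add: sum_diff1)
  finally show ?thesis by (simp add: comp_def)
qed

lemma Ad_E:
  assumes col: "\<forall>a\<in>{1..n}. (\<Sum>p\<in>{2..n}. \<phi> p a) = 0" and n: "n \<ge> 2"
  shows "Eg n (Ad n \<phi>)"
  unfolding Eg_def
proof
  fix x assume x: "x \<in> star_vertices n"
  have "Xop n (Ad n \<phi>) x = (\<Sum>k\<in>{2..n}. Ad n \<phi> x - \<phi> k (x k) + \<phi> k (x 1))"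
    unfolding Xop_def
  proof (rule sum.cong[OF refl])
    fix k assume "k \<in> {2..n}"
    from upd1[OF this] show "Ad n \<phi> (x \<circ> tp 1 k) = Ad n \<phi> x - \<phi> k (x k) + \<phi> k (x 1)" .
  qed
  also have "\<dots> = (real n - 1) * Ad n \<phi> x - Ad n \<phi> x + (\<Sum>k\<in>{2..n}. \<phi> k (x 1))"
    using n by (simp add: sum.distrib sum_subtractf Ad_def of_nat_diff)
  also have "(\<Sum>k\<in>{2..n}. \<phi> k (x 1)) = 0" using col sym_val[OF x, of 1] n by auto
  finally show "Xop n (Ad n \<phi>) x = (real n - 2) * Ad n \<phi> x" by (simp add: algebra_simps)
qed


lemma W_Ad:
  assumes col: "\<forall>a\<in>{1..n}. (\<Sum>q\<in>{2..n}. \<phi> q a) = 0" and p: "p \<in> {2..n}" and x: "x \<in> star_vertices n"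
  shows "W n p (Ad n \<phi>) x = (\<Sum>a\<in>{1..n}. \<phi> p a) - real n * \<phi> p (x 1)"
proof -
  define y where "y = x \<circ> tp 1 p"
  define K where "K = {2..n}-{p}"
  have yp: "y p = x 1" unfolding y_def by simp
  have yk: "y k = x k" if "k \<in> K" for k using that p unfolding y_def K_def by auto
  have J: "Jop n p (Ad n \<phi>) y = (\<Sum>k\<in>K. Ad n \<phi> y - \<phi> p (x 1) - \<phi> k (x k) + \<phi> p (x k) + \<phi> k (x 1))"
    unfolding Jop_def K_def[symmetric]
  proof (rule sum.cong[OF refl])
    fix k assume k: "k \<in> K"
    then have "k \<in> {2..n}" "p \<noteq> k" unfolding K_def by auto
    from upd2[OF p this(1) this(2)] show "Ad n \<phi> (y \<circ> tp p k) = Ad n \<phi> y - \<phi> p (x 1) - \<phi> k (x k) + \<phi> p (x k) + \<phi> k (x 1)"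
      using yp yk[OF k] by simp
  qed
  have cK: "real (card K) = real n - 2" unfolding K_def by (rule card_K[OF p])
  have finK: "finite K" unfolding K_def by simp
  have x1: "x 1 \<in> {1..n}" using sym_val[OF x, of 1] p by auto
  have s1: "(\<Sum>k\<in>K. \<phi> k (x 1)) = - \<phi> p (x 1)"
  proof -
    have "(\<Sum>k\<in>{2..n}. \<phi> k (x 1)) = 0" using col x1 by blast
    moreover have "(\<Sum>k\<in>{2..n}. \<phi> k (x 1)) = \<phi> p (x 1) + (\<Sum>k\<in>K. \<phi> k (x 1))"
      unfolding K_def using p by (simp add: sum.remove)
    ultimately show ?thesis by simp
  qed
  have s2: "(\<Sum>k\<in>K. \<phi> k (x k)) = Ad n \<phi> x - \<phi> p (x p)"
    unfolding K_def Ad_def using p by (simp add: sum_diff1)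
  have s3: "(\<Sum>k\<in>K. \<phi> p (x k)) = (\<Sum>a\<in>{1..n}. \<phi> p a) - \<phi> p (x 1) - \<phi> p (x p)"
  proof -
    have xp: "x permutes {1..n}" using x unfolding star_vertices_def by simp
    have "(\<Sum>a\<in>{1..n}. \<phi> p a) = (\<Sum>k\<in>{1..n}. \<phi> p (x k))"
      by (rule sum.reindex_bij_betw[symmetric, where g="\<phi> p"]) (rule permutes_imp_bij[OF xp])
    also have "(\<Sum>k\<in>{1..n}. \<phi> p (x k)) = \<phi> p (x 1) + (\<Sum>k\<in>{2..n}. \<phi> p (x k))"
    proof -
      have "{1..n} = insert 1 {2..n}" using p by auto
      then show ?thesis by simp
    qed
    also have "(\<Sum>k\<in>{2..n}. \<phi> p (x k)) = \<phi> p (x p) + (\<Sum>k\<in>K. \<phi> p (x k))"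
      unfolding K_def using p by (simp add: sum.remove)
    finally show ?thesis by simp
  qed
  have "Jop n p (Ad n \<phi>) y = (real n - 2) * Ad n \<phi> y - (real n - 2) * \<phi> p (x 1)
      - (\<Sum>k\<in>K. \<phi> k (x k)) + (\<Sum>k\<in>K. \<phi> p (x k)) + (\<Sum>k\<in>K. \<phi> k (x 1))"
    unfolding J using cK by (simp add: sum.distrib sum_subtractf right_diff_distrib)
  also have "\<dots> = (real n - 2) * Ad n \<phi> y - (real n - 2) * \<phi> p (x 1)
      - (Ad n \<phi> x - \<phi> p (x p)) + ((\<Sum>a\<in>{1..n}. \<phi> p a) - \<phi> p (x 1) - \<phi> p (x p)) - \<phi> p (x 1)"
    by (simp only: s1 s2 s3)
  finally have JJ: "Jop n p (Ad n \<phi>) y = (real n - 2) * Ad n \<phi> y - (real n - 2) * \<phi> p (x 1)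
      - (Ad n \<phi> x - \<phi> p (x p)) + ((\<Sum>a\<in>{1..n}. \<phi> p a) - \<phi> p (x 1) - \<phi> p (x p)) - \<phi> p (x 1)" .
  have "W n p (Ad n \<phi>) x = Jop n p (Ad n \<phi>) y - (real n - 2) * Ad n \<phi> y + Ad n \<phi> x"
    unfolding W_def y_def ..
  also have "\<dots> = (\<Sum>a\<in>{1..n}. \<phi> p a) - real n * \<phi> p (x 1)"
    unfolding JJ by (simp add: algebra_simps)
  finally show ?thesis .
qed


lemma W_diff: "W n p (\<lambda>y. a y - b y) x = W n p a x - W n p b x"
  unfolding W_def Jop_diff by (simp add: algebra_simps)

lemma W_sum:
  assumes p: "p \<in> {2..n}"
  shows "(\<Sum>x\<in>star_vertices n. W n p b x) = (\<Sum>x\<in>star_vertices n. b x)"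
proof -
  have p1: "1 \<in> {1..n}" "p \<in> {1..n}" using p by auto
  have "(\<Sum>x\<in>star_vertices n. Jop n p b (x \<circ> tp 1 p)) = (\<Sum>x\<in>star_vertices n. Jop n p b x)"
    by (rule sum_inv[OF p1])
  also have "\<dots> = (\<Sum>k\<in>{2..n}-{p}. \<Sum>x\<in>star_vertices n. b (x \<circ> tp p k))"
    unfolding Jop_def by (rule sum.swap)
  also have "\<dots> = (\<Sum>k\<in>{2..n}-{p}. \<Sum>x\<in>star_vertices n. b x)"
    by (rule sum.cong[OF refl], rule sum_inv) (use p in auto)
  also have "\<dots> = (real n - 2) * (\<Sum>x\<in>star_vertices n. b x)"
    using card_K[OF p] by simp
  finally have A: "(\<Sum>x\<in>star_vertices n. Jop n p b (x \<circ> tp 1 p)) = (real n - 2) * (\<Sum>x\<in>star_vertices n. b x)" .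
  have B: "(\<Sum>x\<in>star_vertices n. b (x \<circ> tp 1 p)) = (\<Sum>x\<in>star_vertices n. b x)"
    by (rule sum_inv[OF p1])
  have "(\<Sum>x\<in>star_vertices n. W n p b x) = (\<Sum>x\<in>star_vertices n. Jop n p b (x \<circ> tp 1 p))
     - (\<Sum>x\<in>star_vertices n. (real n - 2) * b (x \<circ> tp 1 p)) + (\<Sum>x\<in>star_vertices n. b x)"
    unfolding W_def by (simp only: sum.distrib sum_subtractf)
  also have "(\<Sum>x\<in>star_vertices n. (real n - 2) * b (x \<circ> tp 1 p)) = (real n - 2) * (\<Sum>x\<in>star_vertices n. b (x \<circ> tp 1 p))"
    by (rule sum_distrib_left[symmetric])
  finally have X: "(\<Sum>x\<in>star_vertices n. W n p b x) = (\<Sum>x\<in>star_vertices n. Jop n p b (x \<circ> tp 1 p))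
     - (real n - 2) * (\<Sum>x\<in>star_vertices n. b (x \<circ> tp 1 p)) + (\<Sum>x\<in>star_vertices n. b x)" .
  show ?thesis unfolding X A B by simp
qed

lemma decomp:
  assumes E: "Eg n g" and n: "n \<ge> 3"
  shows "\<forall>x\<in>star_vertices n. g x = Ad n (\<lambda>p a. - W n p g (tp 1 a) / real n) x"
proof -
  define \<phi> where "\<phi> = (\<lambda>p a. - W n p g (tp 1 a) / real n)"
  have col: "\<forall>a\<in>{1..n}. (\<Sum>p\<in>{2..n}. \<phi> p a) = 0"
  proof
    fix a assume "a \<in> {1..n}"
    then have "(\<Sum>p\<in>{2..n}. W n p g (tp 1 a)) = 0" by (intro W_col[OF E] tp_sym)
    then show "(\<Sum>p\<in>{2..n}. \<phi> p a) = 0" unfolding \<phi>_def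
      by (simp add: sum_divide_distrib[symmetric] sum_negf)
  qed
  have EA: "Eg n (Ad n \<phi>)" by (rule Ad_E[OF col]) (use n in simp)
  define b where "b = (\<lambda>x. g x - Ad n \<phi> x)"
  have Eb: "Eg n b" unfolding b_def by (rule Eg_diff[OF E EA])
  have sb: "(\<Sum>x\<in>star_vertices n. b x) = 0" by (rule sum_zero[OF Eb n])
  have Wb0: "\<forall>x\<in>star_vertices n. W n p b x = 0" if p: "p \<in> {2..n}" for p
  proof -
    define R where "R = (\<Sum>a\<in>{1..n}. \<phi> p a)"
    have Wbx: "W n p b x = - R" if x: "x \<in> star_vertices n" for x
    proof -
      have "W n p b x = W n p g x - W n p (Ad n \<phi>) x" unfolding b_def by (rule W_diff)
      also have "W n p (Ad n \<phi>) x = R - real n * \<phi> p (x 1)"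
        unfolding R_def by (rule W_Ad[OF col p x])
      also have "real n * \<phi> p (x 1) = - W n p g (tp 1 (x 1))"
        unfolding \<phi>_def using n by simp
      also have "W n p g (tp 1 (x 1)) = W n p g x" by (rule W_dep[OF E p x, symmetric])
      finally show ?thesis by simp
    qed
    have "(\<Sum>x\<in>star_vertices n. W n p b x) = (\<Sum>x\<in>star_vertices n. - R)"
      by (rule sum.cong[OF refl]) (rule Wbx)
    moreover have "(\<Sum>x\<in>star_vertices n. W n p b x) = 0" using W_sum[OF p, of b] sb by simp
    ultimately have "real (card (star_vertices n)) * R = 0" by simp
    moreover have "card (star_vertices n) \<noteq> 0" using finite_sym id_sym by (metis card_0_eq empty_iff)
    ultimately have "R = 0" by simp
    then show ?thesis using Wbx by simp
  qed
  have Sinv: "b (x \<circ> tp 1 p) = b x" if p: "p \<in> {2..n}" and x: "x \<in> star_vertices n" for p x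
  proof -
    have xp: "x \<circ> tp 1 p \<in> star_vertices n" using p by (intro sym_comp[OF x]) auto
    have "W n p b (x \<circ> tp 1 p) = 0" using Wb0[OF p] xp by blast
    then have A: "Jop n p b x - (real n - 2) * b x + b (x \<circ> tp 1 p) = 0"
      unfolding W_def by (simp add: comp_tt)
    have B: "Jop n p (\<lambda>y. b (y \<circ> tp 1 p)) x = (real n - 2) * b (x \<circ> tp 1 p) - b x"
      by (rule JS[OF Eb x p])
    define d where "d = (\<lambda>y. b y - b (y \<circ> tp 1 p))"
    have Jd: "\<forall>z\<in>star_vertices n. Jop n p d z = (real n - 1) * d z"
    proof
      fix z assume z: "z \<in> star_vertices n"
      have zp: "z \<circ> tp 1 p \<in> star_vertices n" using p by (intro sym_comp[OF z]) auto
      have "W n p b (z \<circ> tp 1 p) = 0" using Wb0[OF p] zp by blast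
      then have A: "Jop n p b z - (real n - 2) * b z + b (z \<circ> tp 1 p) = 0"
        unfolding W_def by (simp add: comp_tt)
      have B: "Jop n p (\<lambda>y. b (y \<circ> tp 1 p)) z = (real n - 2) * b (z \<circ> tp 1 p) - b z"
        by (rule JS[OF Eb z p])
      have "Jop n p d z = Jop n p b z - Jop n p (\<lambda>y. b (y \<circ> tp 1 p)) z"
        unfolding d_def by (rule Jop_diff)
      also have "\<dots> = (real n - 1) * d z" using A B unfolding d_def by (simp add: algebra_simps)
      finally show "Jop n p d z = (real n - 1) * d z" .
    qed
    have "d x = 0" using J_zero[OF p Jd] x by blast
    then show ?thesis unfolding d_def by simp
  qed
  have "b x = 0" if x: "x \<in> star_vertices n" for x
  proof -
    have "Xop n b x = (\<Sum>k\<in>{2..n}. b x)" unfolding Xop_def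
      by (rule sum.cong[OF refl]) (rule Sinv[OF _ x])
    also have "\<dots> = (real n - 1) * b x" using n by (simp add: of_nat_diff)
    finally have "(real n - 1) * b x = (real n - 2) * b x" using Eb x unfolding Eg_def by simp
    then show ?thesis by (rule cancel_aux)
  qed
  then show ?thesis unfolding b_def \<phi>_def by simp
qed


lemma walk0: "star_walk n p 0 q \<Longrightarrow> p = q"
  by (erule star_walk.cases) auto

lemma walk1:
  assumes "star_walk n p (Suc 0) q" shows "star_adj n p q"
proof -
  from assms obtain q' where "star_walk n p 0 q'" "star_adj n q' q"
    by (cases rule: star_walk.cases) auto
  then show ?thesis using walk0 by blast
qed

lemma in_second:
  assumes v: "v \<in> star_vertices n" and i: "i \<in> {2..n}" and j: "j \<in> {2..n}" and ij: "i \<noteq> j"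
  shows "v \<circ> tp 1 i \<circ> tp 1 j \<in> second_nbhd n v"
proof -
  define x where "x = v \<circ> tp 1 i \<circ> tp 1 j"
  have vi: "v \<circ> tp 1 i \<in> star_vertices n" using i by (intro sym_comp[OF v]) auto
  have x: "x \<in> star_vertices n" unfolding x_def using j by (intro sym_comp[OF vi]) auto
  have w2: "star_walk n v (Suc (Suc 0)) x"
  proof (rule star_walk.intros(2))
    show "star_walk n v (Suc 0) (v \<circ> tp 1 i)"
    proof (rule star_walk.intros(2))
      show "star_walk n v 0 v" by (rule star_walk.intros(1)[OF v])
      show "star_adj n v (v \<circ> tp 1 i)" unfolding star_adj_def using v vi i by auto
    qed
    show "star_adj n (v \<circ> tp 1 i) x" unfolding star_adj_def x_def using vi x j unfolding x_def by auto
  qed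
  have x1: "x 1 = v j" unfolding x_def using i j ij by auto
  have xj: "x j = v i" unfolding x_def using i j ij by auto
  have n0: "\<not> star_walk n v 0 x"
  proof
    assume "star_walk n v 0 x"
    then have "v = x" by (rule walk0)
    then have "v 1 = v j" using x1 by simp
    then have "1 = j" by (rule sym_inj[OF v])
    then show False using j by auto
  qed
  have n1: "\<not> star_walk n v (Suc 0) x"
  proof
    assume "star_walk n v (Suc 0) x"
    then have "star_adj n v x" by (rule walk1)
    then obtain k where k: "k \<in> {2..n}" and xk: "x = v \<circ> tp 1 k" unfolding star_adj_def by auto
    have "v j = v k" using x1 xk by simp
    then have jk: "j = k" by (rule sym_inj[OF v])
    have "v i = v 1" using xj xk jk by simp
    then have "i = 1" by (rule sym_inj[OF v])
    then show False using i by auto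
  qed
  have "star_dist n v x = 2"
    unfolding star_dist_def
  proof (rule Least_equality)
    show "star_walk n v 2 x" using w2 by (simp add: numeral_2_eq_2)
    fix m assume "star_walk n v m x"
    with n0 n1 show "2 \<le> m" by (cases m; cases "m - 1") auto
  qed
  then show ?thesis unfolding second_nbhd_def x_def[symmetric] using x by simp
qed

lemma n_ineq: "n \<ge> 3 \<Longrightarrow> (real n - 2) * (real n - 2) \<noteq> real n - 1"
proof (cases "n = 3")
  case True then show ?thesis by simp
next
  case False
  assume "n \<ge> 3"
  with False have "real n \<ge> 4" by simp
  then have "(real n - 4) * (real n - 1) \<ge> 0" by simp
  then show ?thesis by (simp add: algebra_simps)
qed

theorem theorem2:
  fixes n :: nat and f g :: "(nat \<Rightarrow> nat) \<Rightarrow> real" and v :: "nat \<Rightarrow> nat"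
  assumes "n \<ge> 3"
    and "star_eigenfunction n f (real n - 2)"
    and "star_eigenfunction n g (real n - 2)"
    and "v \<in> star_vertices n"
    and "\<forall>x\<in>second_nbhd n v. f x = g x"
  shows "\<forall>x\<in>star_vertices n. f x = g x"
proof -
  note n = assms(1) and v = assms(4)
  define h where "h = (\<lambda>x. f x - g x)"
  have E: "Eg n h" unfolding Eg_def
  proof
    fix x assume x: "x \<in> star_vertices n"
    have "Xop n h x = Xop n f x - Xop n g x" unfolding h_def by (rule Xop_diff)
    also have "\<dots> = (real n - 2) * h x"
      using eig_Xop[OF assms(2) x] eig_Xop[OF assms(3) x] unfolding h_def by (simp add: algebra_simps)
    finally show "Xop n h x = (real n - 2) * h x" .
  qed
  have Ex: "\<And>z. z \<in> star_vertices n \<Longrightarrow> Xop n h z = (real n - 2) * h z" using E unfolding Eg_def by blast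
  have h2: "h (v \<circ> tp 1 i \<circ> tp 1 j) = 0" if "i \<in> {2..n}" "j \<in> {2..n}" "i \<noteq> j" for i j
    using assms(5) in_second[OF v that] unfolding h_def by simp
  have vi: "v \<circ> tp 1 i \<in> star_vertices n" if "i \<in> {2..n}" for i using that by (intro sym_comp[OF v]) auto
  have h1: "(real n - 2) * h (v \<circ> tp 1 i) = h v" if i: "i \<in> {2..n}" for i
  proof -
    have "(real n - 2) * h (v \<circ> tp 1 i) = Xop n h (v \<circ> tp 1 i)" using Ex[OF vi[OF i]] by simp
    also have "\<dots> = h (v \<circ> tp 1 i \<circ> tp 1 i) + (\<Sum>k\<in>{2..n}-{i}. h (v \<circ> tp 1 i \<circ> tp 1 k))"
      unfolding Xop_def using i by (simp add: sum.remove)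
    also have "(\<Sum>k\<in>{2..n}-{i}. h (v \<circ> tp 1 i \<circ> tp 1 k)) = 0"
      using h2 i by (intro sum.neutral) auto
    finally show ?thesis by (simp add: comp_tt comp_def)
  qed
  have hv: "h v = 0"
  proof -
    have "(real n - 2) * ((real n - 2) * h v) = (real n - 2) * Xop n h v" using Ex[OF v] by simp
    also have "\<dots> = (\<Sum>i\<in>{2..n}. (real n - 2) * h (v \<circ> tp 1 i))"
      unfolding Xop_def by (simp add: sum_distrib_left)
    also have "\<dots> = (\<Sum>i\<in>{2..n}. h v)" by (rule sum.cong[OF refl]) (rule h1)
    also have "\<dots> = (real n - 1) * h v" using n by (simp add: of_nat_diff)
    finally have "((real n - 2) * (real n - 2)) * h v = (real n - 1) * h v" by (simp add: mult.assoc)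
    then have "((real n - 2) * (real n - 2) - (real n - 1)) * h v = 0" by (metis left_diff_distrib diff_self)
    then have dj: "(real n - 2) * (real n - 2) - (real n - 1) = 0 \<or> h v = 0" by (simp only: mult_eq_0_iff)
    have "(real n - 2) * (real n - 2) - (real n - 1) \<noteq> 0" using n_ineq[OF n] by simp
    then show ?thesis using dj by blast
  qed
  have hvi: "h (v \<circ> tp 1 i) = 0" if i: "i \<in> {2..n}" for i
    using h1[OF i] hv n by simp
  define \<phi> where "\<phi> = (\<lambda>p a. - W n p h (tp 1 a) / real n)"
  have D: "\<forall>x\<in>star_vertices n. h x = Ad n \<phi> x" unfolding \<phi>_def by (rule decomp[OF E n])
  have P1: "\<phi> i (v 1) = \<phi> i (v i)" if i: "i \<in> {2..n}" for i
  proof -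
    have "Ad n \<phi> (v \<circ> tp 1 i) = Ad n \<phi> v - \<phi> i (v i) + \<phi> i (v 1)" by (rule upd1[OF i])
    moreover have "Ad n \<phi> (v \<circ> tp 1 i) = 0" using D vi[OF i] hvi[OF i] by simp
    moreover have "Ad n \<phi> v = 0" using D v hv by simp
    ultimately show ?thesis by simp
  qed
  have P2: "\<phi> j (v i) = \<phi> j (v j)" if i: "i \<in> {2..n}" and j: "j \<in> {2..n}" and ij: "i \<noteq> j" for i j
  proof -
    have "Ad n \<phi> (v \<circ> tp 1 i \<circ> tp 1 j) = Ad n \<phi> (v \<circ> tp 1 i) - \<phi> j ((v \<circ> tp 1 i) j) + \<phi> j ((v \<circ> tp 1 i) 1)"
      by (rule upd1[OF j])
    moreover have "(v \<circ> tp 1 i) j = v j" using i j ij by auto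
    moreover have "(v \<circ> tp 1 i) 1 = v i" by simp
    moreover have "Ad n \<phi> (v \<circ> tp 1 i \<circ> tp 1 j) = 0"
    proof -
      have "v \<circ> tp 1 i \<circ> tp 1 j \<in> star_vertices n" using j by (intro sym_comp[OF vi[OF i]]) auto
      then show ?thesis using D h2[OF i j ij] by simp
    qed
    moreover have "Ad n \<phi> (v \<circ> tp 1 i) = 0" using D vi[OF i] hvi[OF i] by simp
    ultimately show ?thesis by simp
  qed
  have P: "\<phi> j (v m) = \<phi> j (v j)" if j: "j \<in> {2..n}" and m: "m \<in> {1..n}" for j m
  proof (cases "m = 1")
    case True then show ?thesis using P1[OF j] by simp
  next
    case False
    show ?thesis
    proof (cases "m = j")
      case True then show ?thesis by simp
    next
      case False
      with \<open>m \<noteq> 1\<close> m have "m \<in> {2..n}" by auto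
      from P2[OF this j False] show ?thesis .
    qed
  qed
  have "h x = 0" if x: "x \<in> star_vertices n" for x
  proof -
    have vp: "v permutes {1..n}" using v unfolding star_vertices_def by simp
    have "Ad n \<phi> x = (\<Sum>p\<in>{2..n}. \<phi> p (v p))" unfolding Ad_def
    proof (rule sum.cong[OF refl])
      fix p assume p: "p \<in> {2..n}"
      have xp: "x p \<in> {1..n}" using sym_val[OF x, of p] p by auto
      define m where "m = inv v (x p)"
      have m: "m \<in> {1..n}" unfolding m_def using xp permutes_in_image[OF permutes_inv[OF vp]] by blast
      have "v m = x p" unfolding m_def by (rule permutes_inverses(1)[OF vp])
      then show "\<phi> p (x p) = \<phi> p (v p)" using P[OF p m] by simp
    qed
    also have "\<dots> = Ad n \<phi> v" unfolding Ad_def ..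
    also have "\<dots> = 0" using D v hv by simp
    finally show ?thesis using D x by simp
  qed
  then show ?thesis unfolding h_def by simp
qed

end
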